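(* Let $0<s<1$. Then $\sigma_{ap}(T_{s^z})\subseteq\{s^w:\mathrm{Re}\,w=\tfrac m2,\ m=-1,0,1,2,\dots\}\cup\{0\}$.
   Context: $\mu$ is the measure on $\Omega=\{\mathrm{Re}\,z\ge-\tfrac12\}$ given by $d\mu=\sum_{n=-1}^\infty \frac{|\Gamma(\frac n2+iy+1)|^2}{2\pi(n+1)!}\,dy\,d\delta_{n/2}(x)$; $H^2(\mu)$ is the closed span of $\{a^z:0<a\le1\}$ in $L^2(\mu)$; $T_{s^z}$ is multiplication by $s^z=e^{z\ln s}$ on $H^2(\mu)$; $\sigma_{ap}$ denotes the approximate point spectrum. *)

theory Defs
  imports "HOL-Analysis.Analysis"
begin

definition cpow :: "real \<Rightarrow> complex \<Rightarrow> complex" where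
  "cpow a z = exp (z * complex_of_real (ln a))"

text \<open>Density on the line Re z = n/2, indexed by m = n + 1 :: nat (so n ranges over -1,0,1,...):
  |Gamma(n/2 + i y + 1)|^2 / (2 pi (n+1)!).\<close>
definition gweight :: "nat \<Rightarrow> real \<Rightarrow> real" where
  "gweight m y = (cmod (Gamma (Complex ((real m + 1) / 2) y)))\<^sup>2 / (2 * pi * fact m)"

text \<open>The measure mu on Omega = {Re z \<ge> -1/2}: sum over n \<ge> -1 of weighted Lebesgue
  measure on the vertical line Re z = n/2.\<close>
definition mu :: "complex measure" where
  "mu = distr (density (count_space UNIV \<Otimes>\<^sub>M lborel) (\<lambda>(m, y). ennreal (gweight m y)))
              borel (\<lambda>(m, y). Complex ((real m - 1) / 2) y)"

definition L2int :: "(complex \<Rightarrow> complex) \<Rightarrow> ennreal" where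
  "L2int f = (\<integral>\<^sup>+ z. ennreal ((cmod (f z))\<^sup>2) \<partial>mu)"

definition L2 :: "(complex \<Rightarrow> complex) set" where
  "L2 = {f. f \<in> borel_measurable mu \<and> L2int f < \<infinity>}"

definition L2norm :: "(complex \<Rightarrow> complex) \<Rightarrow> real" where
  "L2norm f = sqrt (enn2real (L2int f))"

definition span_pow :: "(complex \<Rightarrow> complex) set" where
  "span_pow = {g. \<exists>A c. finite A \<and> A \<subseteq> {0<..1} \<and>
                     g = (\<lambda>z. \<Sum>a\<in>A. c a * cpow a z)}"

definition H2 :: "(complex \<Rightarrow> complex) set" where
  "H2 = {f \<in> L2. \<exists>g. (\<forall>k. g k \<in> span_pow) \<and>
                    (\<lambda>k. L2norm (\<lambda>z. f z - g k z)) \<longlonglongrightarrow> 0}"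

definition T_mult :: "real \<Rightarrow> (complex \<Rightarrow> complex) \<Rightarrow> (complex \<Rightarrow> complex)" where
  "T_mult s f = (\<lambda>z. cpow s z * f z)"

definition approx_point_spectrum ::
  "((complex \<Rightarrow> complex) \<Rightarrow> (complex \<Rightarrow> complex)) \<Rightarrow> complex set" where
  "approx_point_spectrum T = {c. \<exists>f. (\<forall>k. f k \<in> H2 \<and> L2norm (f k) = 1) \<and>
       (\<lambda>k. L2norm (\<lambda>z. T (f k) z - c * f k z)) \<longlonglongrightarrow> 0}"

end

theory Submission imports Defs begin
definition "phi = (\<lambda>(m::nat, y::real). Complex ((real m - 1) / 2) y)"
definition "MM = density (count_space UNIV \<Otimes>\<^sub>M lborel) (\<lambda>(m, y). ennreal (gweight m y))"
lemma phi_meas: "phi \<in> measurable MM borel"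
proof -
  have e: "phi = (\<lambda>x. complex_of_real ((real (fst x) - 1) / 2) + \<i> * complex_of_real (snd x))"
    by (auto simp: phi_def complex_eq_iff)
  show ?thesis unfolding e MM_def
    by (simp add: measurable_density_eq1) measurable
qed
lemma mu_eq: "mu = distr MM borel phi" unfolding mu_def MM_def phi_def by simp
lemma sets_mu: "sets mu = sets borel" by (simp add: mu_eq)
lemma nn_mu: "h \<in> borel_measurable borel \<Longrightarrow> (\<integral>\<^sup>+z. h z \<partial>mu) = (\<integral>\<^sup>+x. h (phi x) \<partial>MM)"
  unfolding mu_eq by (rule nn_integral_distr[OF phi_meas]) simp

lemma L2int_phi: "f \<in> borel_measurable borel \<Longrightarrow>
   L2int f = (\<integral>\<^sup>+x. ennreal ((cmod (f (phi x)))\<^sup>2) \<partial>MM)"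
  unfolding L2int_def by (rule nn_mu) measurable

lemma cmp:
  assumes f: "f \<in> borel_measurable borel" and g: "g \<in> borel_measurable borel"
    and a: "a \<ge> 0" and le: "\<And>x. a * (cmod (f (phi x)))\<^sup>2 \<le> (cmod (g (phi x)))\<^sup>2"
  shows "ennreal a * L2int f \<le> L2int g"
proof -
  have fm: "(\<lambda>x. ennreal ((cmod (f (phi x)))\<^sup>2)) \<in> borel_measurable MM"
  proof -
    have "(\<lambda>x. f (phi x)) \<in> borel_measurable MM"
      using measurable_comp[OF phi_meas f] by (simp add: o_def)
    then show ?thesis by measurable
  qed
  have "ennreal a * L2int f = (\<integral>\<^sup>+x. ennreal a * ennreal ((cmod (f (phi x)))\<^sup>2) \<partial>MM)"
    unfolding L2int_phi[OF f] by (rule nn_integral_cmult[symmetric, OF fm])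
  also have "\<dots> \<le> (\<integral>\<^sup>+x. ennreal ((cmod (g (phi x)))\<^sup>2) \<partial>MM)"
    apply (rule nn_integral_mono)
    using le a by (simp add: ennreal_mult[symmetric])
  also have "\<dots> = L2int g" using L2int_phi[OF g] by simp
  finally show ?thesis .
qed

lemma cmod_cpow: "cmod (cpow s z) = exp (Re z * ln s)"
  unfolding cpow_def by simp

lemma L2norm_ge:
  assumes "ennreal (d\<^sup>2) \<le> L2int g" "L2int g < \<infinity>" "d \<ge> 0"
  shows "d \<le> L2norm g"
proof -
  obtain r where r: "L2int g = ennreal r" "r \<ge> 0" using assms(2)
    by (metis ennreal_cases infinity_ennreal_def less_irrefl)
  have "d\<^sup>2 \<le> r" using assms(1) r by (simp add: ennreal_le_iff)
  then have "sqrt (d\<^sup>2) \<le> sqrt r" by (rule real_sqrt_le_mono)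
  thus ?thesis using r assms(3) by (simp add: L2norm_def)
qed

lemma L2int_one: assumes "L2norm f = 1" shows "L2int f = 1"
proof -
  have "enn2real (L2int f) = 1" using assms unfolding L2norm_def
    by (metis real_sqrt_eq_1_iff)
  thus ?thesis by (metis ennreal_enn2real_if ennreal_1 zero_neq_one)
qed
theorem mainTheorem5:
  fixes s :: real
  assumes "0 < s" and "s < 1"
  shows "approx_point_spectrum (T_mult s) \<subseteq>
           {cpow s w | w. \<exists>m::int. m \<ge> -1 \<and> Re w = real_of_int m / 2} \<union> {0}"
proof
  fix c assume cA: "c \<in> approx_point_spectrum (T_mult s)"
  show "c \<in> {cpow s w | w. \<exists>m::int. m \<ge> -1 \<and> Re w = real_of_int m / 2} \<union> {0}"
  proof (rule ccontr)
    assume nc: "c \<notin> {cpow s w | w. \<exists>m::int. m \<ge> -1 \<and> Re w = real_of_int m / 2} \<union> {0}"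
    have c0: "c \<noteq> 0" using nc by auto
    define r where "r = cmod c"
    have r0: "r > 0" using c0 by (simp add: r_def)
    define a where "a = (\<lambda>m::nat. exp ((real m - 1) / 2 * ln s))"
    have lns: "ln s < 0" using assms by simp
    have ane: "a m \<noteq> r" for m
    proof
      assume h: "a m = r"
      define w where "w = Complex ((real m - 1) / 2) (Arg c / ln s)"
      have "cpow s w = exp (Complex ((real m - 1) / 2 * ln s) (Arg c))"
      proof -
        have "w * complex_of_real (ln s) = Complex ((real m - 1) / 2 * ln s) (Arg c)"
          unfolding w_def using lns by (simp add: complex_eq_iff)
        thus ?thesis unfolding cpow_def by simp
      qed
      also have "\<dots> = of_real (a m) * cis (Arg c)"
        by (simp add: exp_eq_polar a_def)
      also have "\<dots> = c" using h r_def by (simp add: rcis_cmod_Arg[unfolded rcis_def])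
      finally have "cpow s w = c" .
      moreover have "Re w = real_of_int (int m - 1) / 2" "int m - 1 \<ge> -1" by (auto simp: w_def)
      ultimately show False using nc by blast
    qed
    have alim: "a \<longlonglongrightarrow> 0"
    proof -
      define q where "q = exp (ln s / 2)"
      have q: "\<bar>q\<bar> < 1" unfolding q_def using lns by simp
      have e: "a m = exp (- ln s / 2) * q ^ m" for m
        unfolding a_def q_def by (simp add: exp_of_nat_mult[symmetric] exp_add[symmetric] field_simps)
      have "(\<lambda>m. exp (- ln s / 2) * q ^ m) \<longlonglongrightarrow> exp (- ln s / 2) * 0"
        by (intro tendsto_mult tendsto_const LIMSEQ_power_zero) (use q in simp)
      moreover have "a = (\<lambda>m. exp (- ln s / 2) * q ^ m)" using e by (rule ext)
      ultimately show ?thesis by simp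
    qed
    obtain N where N: "\<And>m. m \<ge> N \<Longrightarrow> a m < r/2"
    proof -
      from alim r0 obtain N where "\<forall>n\<ge>N. dist (a n) 0 < r/2" unfolding LIMSEQ_def
        by (meson half_gt_zero)
      then show ?thesis using that by (metis abs_ge_self dist_real_def diff_zero le_less_trans)
    qed
    define d where "d = Min (insert (r/2) ((\<lambda>m. \<bar>a m - r\<bar>) ` {..<N}))"
    have d0: "d > 0" unfolding d_def using r0 ane by auto
    have dle: "d \<le> \<bar>a m - r\<bar>" for m
    proof (cases "m < N")
      case True thus ?thesis unfolding d_def by (intro Min_le) auto
    next
      case False
      then have "d \<le> r/2" unfolding d_def by (intro Min_le) auto
      thus ?thesis using N[of m] False by auto
    qed
    define C where "C = a 0 + r"
    have C0: "C > 0" unfolding C_def a_def using r0 by (simp add: add_pos_pos)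
    have amono: "a m \<le> a 0" for m unfolding a_def using lns
      by (intro exp_le_cancel_iff[THEN iffD2] mult_right_mono_neg) auto
    have cm: "cmod (cpow s (phi x)) = a (fst x)" for x
      by (cases x) (simp add: cmod_cpow phi_def a_def)
    have low: "d * cmod (f (phi x)) \<le> cmod (cpow s (phi x) * f (phi x) - c * f (phi x))" for f x
    proof -
      have "d \<le> \<bar>cmod (cpow s (phi x)) - cmod c\<bar>" using dle cm r_def by simp
      also have "\<dots> \<le> cmod (cpow s (phi x) - c)" by (rule norm_triangle_ineq3)
      finally have "d * cmod (f (phi x)) \<le> cmod (cpow s (phi x) - c) * cmod (f (phi x))"
        by (simp add: mult_right_mono)
      thus ?thesis by (simp add: left_diff_distrib[symmetric] norm_mult)
    qed
    have up: "cmod (cpow s (phi x) * f (phi x) - c * f (phi x)) \<le> C * cmod (f (phi x))" for f x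
    proof -
      have "cmod (cpow s (phi x) - c) \<le> cmod (cpow s (phi x)) + cmod c" by (rule norm_triangle_ineq4)
      also have "\<dots> \<le> C" using cm amono r_def C_def by simp
      finally show ?thesis
        by (simp add: left_diff_distrib[symmetric] norm_mult mult_right_mono)
    qed
    obtain f where f: "\<And>k. f k \<in> H2 \<and> L2norm (f k) = 1"
      and lim: "(\<lambda>k. L2norm (\<lambda>z. T_mult s (f k) z - c * f k z)) \<longlonglongrightarrow> 0"
      using cA unfolding approx_point_spectrum_def by blast
    have ge: "d \<le> L2norm (\<lambda>z. T_mult s (f k) z - c * f k z)" for k
    proof -
      have "f k \<in> borel_measurable mu" using f[of k] by (simp add: H2_def L2_def)
      then have fm: "f k \<in> borel_measurable borel" using measurable_cong_sets[OF sets_mu refl] by blast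
      have gm: "(\<lambda>z. T_mult s (f k) z - c * f k z) \<in> borel_measurable borel"
        unfolding T_mult_def cpow_def using fm by measurable
      have one: "L2int (f k) = 1" using f[of k] L2int_one by blast
      have le1: "d\<^sup>2 * (cmod (f k (phi x)))\<^sup>2 \<le> (cmod (T_mult s (f k) (phi x) - c * f k (phi x)))\<^sup>2" for x
      proof -
        have "(d * cmod (f k (phi x)))\<^sup>2 \<le> (cmod (T_mult s (f k) (phi x) - c * f k (phi x)))\<^sup>2"
          using low[where f="f k" and x=x] d0 unfolding T_mult_def by (intro power_mono) simp_all
        thus ?thesis by (simp add: power_mult_distrib)
      qed
      have le2: "1 / C\<^sup>2 * (cmod (T_mult s (f k) (phi x) - c * f k (phi x)))\<^sup>2 \<le> (cmod (f k (phi x)))\<^sup>2" for x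
      proof -
        have "(cmod (T_mult s (f k) (phi x) - c * f k (phi x)))\<^sup>2 \<le> (C * cmod (f k (phi x)))\<^sup>2"
          using up[where f="f k" and x=x] unfolding T_mult_def by (intro power_mono) simp_all
        thus ?thesis using C0 by (simp add: power_mult_distrib divide_simps mult.commute)
      qed
      have "ennreal (d\<^sup>2) * L2int (f k) \<le> L2int (\<lambda>z. T_mult s (f k) z - c * f k z)"
        by (rule cmp[OF fm gm _ le1]) simp
      then have lo: "ennreal (d\<^sup>2) \<le> L2int (\<lambda>z. T_mult s (f k) z - c * f k z)" using one by simp
      have "ennreal (1 / C\<^sup>2) * L2int (\<lambda>z. T_mult s (f k) z - c * f k z) \<le> L2int (f k)"
        by (rule cmp[OF gm fm _ le2]) simp
      then have ne: "L2int (\<lambda>z. T_mult s (f k) z - c * f k z) \<noteq> \<infinity>"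
      proof (rule contrapos_pn)
        assume eq: "L2int (\<lambda>z. T_mult s (f k) z - c * f k z) = \<infinity>"
        have "ennreal (1 / C\<^sup>2) \<noteq> 0" using C0 by simp
        then have "ennreal (1 / C\<^sup>2) * L2int (\<lambda>z. T_mult s (f k) z - c * f k z) = \<infinity>"
          unfolding eq infinity_ennreal_def by (simp add: ennreal_mult_top)
        then show "\<not> ennreal (1 / C\<^sup>2) * L2int (\<lambda>z. T_mult s (f k) z - c * f k z) \<le> L2int (f k)"
          unfolding one by (simp add: top_unique)
      qed
      have lt: "L2int (\<lambda>z. T_mult s (f k) z - c * f k z) < \<infinity>"
        using ne unfolding infinity_ennreal_def by (rule top.not_eq_extremum[THEN iffD1])
      show ?thesis by (rule L2norm_ge[OF lo lt]) (use d0 in simp)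
    qed
    obtain k where "L2norm (\<lambda>z. T_mult s (f k) z - c * f k z) < d"
    proof -
      from lim d0 obtain N where "\<forall>n\<ge>N. dist (L2norm (\<lambda>z. T_mult s (f n) z - c * f n z)) 0 < d"
        unfolding LIMSEQ_def by blast
      then have "\<bar>L2norm (\<lambda>z. T_mult s (f N) z - c * f N z)\<bar> < d" by (simp add: dist_real_def)
      then have "L2norm (\<lambda>z. T_mult s (f N) z - c * f N z) < d" by linarith
      then show ?thesis using that by blast
    qed
    with ge[of k] show False by simp
  qed
qed
end
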